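(* A subgrid tensor $\tau$ whose deviatoric part has the form $$\tau^d = \alpha_1^0 S + \frac{\alpha_2^0}{|S|}(S^2)^d + \frac{\alpha_3^0}{|S|}(\Omega^2)^d + \frac{\alpha_4^0}{|S|^2}(\Omega S\Omega)^d + \frac{\alpha_5^0}{|S|}[S,\Omega] + \frac{\alpha_6^0}{|S|^2}[S^2,\Omega] + \frac{\alpha_7^0}{|S|^3}[\Omega S\Omega,\Omega],$$ where $|S|=\sqrt{\operatorname{tr}(S^2)}$ and $\alpha_1^0,\dots,\alpha_7^0$ are arbitrary scalar functions of $$v_1=\frac{\operatorname{tr}(S^3)}{|S|^3},\quad v_2=\frac{\operatorname{tr}(S^2\Omega^2)}{|S|^4},\quad v_3=\frac{\operatorname{tr}(\Omega^2)}{|S|^2},\quad v_4=\frac{\operatorname{tr}(S\Omega^2)}{|S|^3},\quad v_5=\frac{\operatorname{tr}(S^2\Omega^2S\Omega)}{|S|^6},$$ is invariant under the symmetry groups $G_t$, $Gal$, $SO(3)$, $G_p$ and $G_s$ of the Navier–Stokes equations.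
   Context: Consider the filtered incompressible Navier–Stokes equations on $\mathbb R^3$: $\partial_t u + \nabla\cdot(u\otimes u) + \frac1\rho \nabla p - 2\nu\,\nabla\cdot S + \nabla\cdot\tau = 0$, $\nabla\cdot u=0$, where $u(t,x)\in\mathbb R^3$ is the filtered velocity, $p$ the filtered pressure, $\nu>0$ the kinematic viscosity, $\rho>0$ the density, $S=\frac12(\nabla u+\nabla u^T)$ the (filtered) strain-rate tensor, $\Omega=\frac12(\nabla u-\nabla u^T)$ the (filtered) vorticity tensor, and $\tau$ the subgrid tensor, which is modelled as a tensor-valued function of $(S,\Omega)$. The following groups act on $(t,x,u,p)$: time translations $G_t$: $(t,x,u,p)\mapsto(t+\epsilon,x,u,p)$, $\epsilon\in\mathbb R$; the generalized Galilean group $Gal$: $(t,x,u,p)\mapsto(t,x+\alpha(t),u+\dot\alpha(t),p-\rho\,\ddot\alpha(t)\cdot x)$, $\alpha\in C^2(\mathbb R,\mathbb R^3)$; rotations $SO(3)$: $(t,x,u,p)\mapsto(t,Rx,Ru,p)$, $RR^T=I$, $\det R=1$; pressure translations $G_p$: $(t,x,u,p)\mapsto(t,x,u,p+\xi(t))$, $\xi\in C^0(\mathbb R,\mathbb R)$; scalings $G_s$: $(t,x,u,p)\mapsto(e^{2\epsilon}t,e^{\epsilon}x,e^{-\epsilon}u,e^{-2\epsilon}p)$, $\epsilon\in\mathbb R$. A model $\tau$ is called invariant under such a group $G$ if every element of $G$, acting on $(t,x,u,p)$, is a symmetry of the filtered equations with that model (maps solutions to solutions). For a $3\times 3$ matrix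 $Q$, $Q^d=Q-\frac13\operatorname{tr}(Q)\,I$ denotes its deviatoric part, and $[P,Q]=PQ-QP$. *)

theory Defs
  imports "HOL-Analysis.Analysis"
begin

type_synonym vec3 = "real^3"
type_synonym mat3 = "real^3^3"

definition dev :: "mat3 \<Rightarrow> mat3" where
  "dev Q = Q - (trace Q / 3) *\<^sub>R mat 1"

definition comm :: "mat3 \<Rightarrow> mat3 \<Rightarrow> mat3" where
  "comm P Q = P ** Q - Q ** P"

definition normS :: "mat3 \<Rightarrow> real" where
  "normS S = sqrt (trace (S ** S))"

definition outer :: "vec3 \<Rightarrow> mat3" where
  "outer v = (\<chi> i j. v $ i * v $ j)"

type_synonym coeff = "real \<Rightarrow> real \<Rightarrow> real \<Rightarrow> real \<Rightarrow> real \<Rightarrow> real"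

definition tau_model ::
  "coeff \<Rightarrow> coeff \<Rightarrow> coeff \<Rightarrow> coeff \<Rightarrow> coeff \<Rightarrow> coeff \<Rightarrow> coeff \<Rightarrow> mat3 \<Rightarrow> mat3 \<Rightarrow> mat3" where
  "tau_model a1 a2 a3 a4 a5 a6 a7 S W =
    (let n = normS S;
         v1 = trace (S ** S ** S) / n ^ 3;
         v2 = trace (S ** S ** W ** W) / n ^ 4;
         v3 = trace (W ** W) / n ^ 2;
         v4 = trace (S ** W ** W) / n ^ 3;
         v5 = trace (S ** S ** W ** W ** S ** W) / n ^ 6
     in a1 v1 v2 v3 v4 v5 *\<^sub>R S
      + (a2 v1 v2 v3 v4 v5 / n) *\<^sub>R dev (S ** S)
      + (a3 v1 v2 v3 v4 v5 / n) *\<^sub>R dev (W ** W)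
      + (a4 v1 v2 v3 v4 v5 / n ^ 2) *\<^sub>R dev (W ** S ** W)
      + (a5 v1 v2 v3 v4 v5 / n) *\<^sub>R comm S W
      + (a6 v1 v2 v3 v4 v5 / n ^ 2) *\<^sub>R comm (S ** S) W
      + (a7 v1 v2 v3 v4 v5 / n ^ 3) *\<^sub>R comm (W ** S ** W) W)"

text \<open>Velocity gradient: entry (i,j) is the partial derivative of u_i w.r.t. x_j.\<close>
definition grad_u :: "(real \<Rightarrow> vec3 \<Rightarrow> vec3) \<Rightarrow> real \<Rightarrow> vec3 \<Rightarrow> mat3" where
  "grad_u u t x = jacobian (u t) (at x)"

definition strain :: "(real \<Rightarrow> vec3 \<Rightarrow> vec3) \<Rightarrow> real \<Rightarrow> vec3 \<Rightarrow> mat3" where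
  "strain u t x = (1/2) *\<^sub>R (grad_u u t x + transpose (grad_u u t x))"

definition vort :: "(real \<Rightarrow> vec3 \<Rightarrow> vec3) \<Rightarrow> real \<Rightarrow> vec3 \<Rightarrow> mat3" where
  "vort u t x = (1/2) *\<^sub>R (grad_u u t x - transpose (grad_u u t x))"

definition dt :: "(real \<Rightarrow> vec3 \<Rightarrow> vec3) \<Rightarrow> real \<Rightarrow> vec3 \<Rightarrow> vec3" where
  "dt u t x = vector_derivative (\<lambda>s. u s x) (at t)"

definition partial :: "(vec3 \<Rightarrow> real) \<Rightarrow> 3 \<Rightarrow> vec3 \<Rightarrow> real" where
  "partial f j x = frechet_derivative f (at x) (axis j 1)"

definition grad :: "(vec3 \<Rightarrow> real) \<Rightarrow> vec3 \<Rightarrow> vec3" where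
  "grad f x = (\<chi> j. partial f j x)"

definition divM :: "(vec3 \<Rightarrow> mat3) \<Rightarrow> vec3 \<Rightarrow> vec3" where
  "divM M x = (\<chi> i. \<Sum>j\<in>UNIV. partial (\<lambda>y. M y $ i $ j) j x)"

definition NS_sol ::
  "real \<Rightarrow> real \<Rightarrow> (mat3 \<Rightarrow> mat3 \<Rightarrow> mat3) \<Rightarrow> (real \<Rightarrow> vec3 \<Rightarrow> vec3) \<Rightarrow> (real \<Rightarrow> vec3 \<Rightarrow> real) \<Rightarrow> bool" where
  "NS_sol \<nu> \<rho> \<tau> u p \<longleftrightarrow>
    (\<forall>t x.
       (\<lambda>(s, y). u s y) differentiable at (t, x)
     \<and> (\<forall>i j. (\<lambda>y. strain u t y $ i $ j) differentiable at x)
     \<and> (\<forall>i j. (\<lambda>y. \<tau> (strain u t y) (vort u t y) $ i $ j) differentiable at x)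
     \<and> p t differentiable at x
     \<and> trace (grad_u u t x) = 0
     \<and> dt u t x + divM (\<lambda>y. outer (u t y)) x + (1 / \<rho>) *\<^sub>R grad (p t) x
         - (2 * \<nu>) *\<^sub>R divM (strain u t) x
         + divM (\<lambda>y. \<tau> (strain u t y) (vort u t y)) x = 0)"

definition inv_Gt where
  "inv_Gt \<nu> \<rho> \<tau> \<longleftrightarrow> (\<forall>\<epsilon>::real. \<forall>u p. NS_sol \<nu> \<rho> \<tau> u p \<longrightarrow>
     NS_sol \<nu> \<rho> \<tau> (\<lambda>t x. u (t - \<epsilon>) x) (\<lambda>t x. p (t - \<epsilon>) x))"

definition inv_Gal where
  "inv_Gal \<nu> \<rho> \<tau> \<longleftrightarrow> (\<forall>(\<alpha>::real \<Rightarrow> vec3) \<alpha>' \<alpha>''.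
     (\<forall>t. (\<alpha> has_vector_derivative \<alpha>' t) (at t)) \<and>
     (\<forall>t. (\<alpha>' has_vector_derivative \<alpha>'' t) (at t)) \<and> continuous_on UNIV \<alpha>'' \<longrightarrow>
     (\<forall>u p. NS_sol \<nu> \<rho> \<tau> u p \<longrightarrow>
        NS_sol \<nu> \<rho> \<tau> (\<lambda>t x. u t (x - \<alpha> t) + \<alpha>' t)
                        (\<lambda>t x. p t (x - \<alpha> t) - \<rho> * (\<alpha>'' t \<bullet> (x - \<alpha> t)))))"

definition inv_SO3 where
  "inv_SO3 \<nu> \<rho> \<tau> \<longleftrightarrow> (\<forall>R::mat3. R ** transpose R = mat 1 \<and> det R = 1 \<longrightarrow>
     (\<forall>u p. NS_sol \<nu> \<rho> \<tau> u p \<longrightarrow>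
        NS_sol \<nu> \<rho> \<tau> (\<lambda>t x. R *v u t (transpose R *v x)) (\<lambda>t x. p t (transpose R *v x))))"

definition inv_Gp where
  "inv_Gp \<nu> \<rho> \<tau> \<longleftrightarrow> (\<forall>\<xi>::real \<Rightarrow> real. continuous_on UNIV \<xi> \<longrightarrow>
     (\<forall>u p. NS_sol \<nu> \<rho> \<tau> u p \<longrightarrow> NS_sol \<nu> \<rho> \<tau> u (\<lambda>t x. p t x + \<xi> t)))"

definition inv_Gs where
  "inv_Gs \<nu> \<rho> \<tau> \<longleftrightarrow> (\<forall>\<epsilon>::real. \<forall>u p. NS_sol \<nu> \<rho> \<tau> u p \<longrightarrow>
     NS_sol \<nu> \<rho> \<tau> (\<lambda>t x. exp (- \<epsilon>) *\<^sub>R u (exp (-2 * \<epsilon>) * t) (exp (- \<epsilon>) *\<^sub>R x))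
                     (\<lambda>t x. exp (-2 * \<epsilon>) * p (exp (-2 * \<epsilon>) * t) (exp (- \<epsilon>) *\<^sub>R x)))"

end

theory Submission
  imports Defs
begin

lemma mat_differentiable_iff:
  fixes M :: "'a::real_normed_vector \<Rightarrow> mat3"
  shows "M differentiable (at x) \<longleftrightarrow> (\<forall>i j. (\<lambda>y. M y $ i $ j) differentiable (at x))"
  apply (subst differentiable_componentwise_within)
  apply (auto simp: Basis_vec_def inner_axis)
  done

lemma has_derivative_entry:
  assumes "(M has_derivative M') F"
  shows "((\<lambda>y. M y $ i $ j) has_derivative (\<lambda>h. M' h $ i $ j)) F"
  using bounded_linear.has_derivative[OF bounded_linear_vec_nth,
      OF bounded_linear.has_derivative[OF bounded_linear_vec_nth, OF assms]] .

definition divL :: "(vec3 \<Rightarrow> mat3) \<Rightarrow> vec3" where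
  "divL L = (\<chi> i. \<Sum>j\<in>UNIV. L (axis j 1) $ i $ j)"

lemma divM_eq:
  assumes "(M has_derivative M') (at x)"
  shows "divM M x = divL M'"
proof -
  have "frechet_derivative (\<lambda>y. M y $ i $ j) (at x) = (\<lambda>h. M' h $ i $ j)" for i j
    using frechet_derivative_at[OF has_derivative_entry[OF assms]] by simp
  then show ?thesis by (simp add: divM_def divL_def partial_def)
qed

lemma lin_expand:
  fixes L :: "vec3 \<Rightarrow> 'b::real_vector"
  assumes "linear L"
  shows "L h = (\<Sum>k\<in>UNIV. h$k *\<^sub>R L (axis k 1))"
proof -
  have "h = (\<Sum>k\<in>UNIV. h$k *\<^sub>R axis k 1)" using basis_expansion[of h] by (simp add: scalar_mult_eq_scaleR)
  then have "L h = L (\<Sum>k\<in>UNIV. h$k *\<^sub>R axis k 1)" by simp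
  also have "\<dots> = (\<Sum>k\<in>UNIV. h$k *\<^sub>R L (axis k 1))"
    by (simp add: linear_sum[OF assms] linear_scale[OF assms] o_def)
  finally show ?thesis .
qed

lemma swap4:
  "(\<Sum>j\<in>A. \<Sum>b\<in>B. \<Sum>a\<in>C. \<Sum>k\<in>D. f j b a k) = (\<Sum>a\<in>C. \<Sum>k\<in>D. \<Sum>b\<in>B. \<Sum>j\<in>A. f j b a k)"
proof -
  have "(\<Sum>j\<in>A. \<Sum>b\<in>B. \<Sum>a\<in>C. \<Sum>k\<in>D. f j b a k) = (\<Sum>b\<in>B. \<Sum>j\<in>A. \<Sum>a\<in>C. \<Sum>k\<in>D. f j b a k)"
    by (rule sum.swap)
  also have "\<dots> = (\<Sum>b\<in>B. \<Sum>a\<in>C. \<Sum>j\<in>A. \<Sum>k\<in>D. f j b a k)"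
    by (rule sum.cong[OF refl], rule sum.swap)
  also have "\<dots> = (\<Sum>b\<in>B. \<Sum>a\<in>C. \<Sum>k\<in>D. \<Sum>j\<in>A. f j b a k)"
    by (rule sum.cong[OF refl], rule sum.cong[OF refl], rule sum.swap)
  also have "\<dots> = (\<Sum>a\<in>C. \<Sum>b\<in>B. \<Sum>k\<in>D. \<Sum>j\<in>A. f j b a k)"
    by (rule sum.swap)
  also have "\<dots> = (\<Sum>a\<in>C. \<Sum>k\<in>D. \<Sum>b\<in>B. \<Sum>j\<in>A. f j b a k)"
    by (rule sum.cong[OF refl], rule sum.swap)
  finally show ?thesis .
qed

lemma divL_rot:
  assumes lin: "linear L" and orth: "transpose R ** R = mat 1"
  shows "divL (\<lambda>h. R ** L (transpose R *v h) ** transpose R) = R *v divL L"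
proof -
  have o: "(\<Sum>j\<in>UNIV. R$j$k * R$j$b) = (if k = b then 1 else 0)" for k b
  proof -
    have "(transpose R ** R) $ k $ b = (if k = b then 1 else 0)" using orth by (simp add: mat_def)
    then show ?thesis by (simp add: matrix_matrix_mult_def transpose_def)
  qed
  have e: "L (transpose R *v axis j 1) = (\<Sum>k\<in>UNIV. R$j$k *\<^sub>R L (axis k 1))" for j
    by (subst lin_expand[OF lin]) (simp add: transpose_def matrix_vector_mult_def axis_def if_distrib cong: if_cong)
  show ?thesis
  unfolding vec_eq_iff
  proof
    fix i
    have "divL (\<lambda>h. R ** L (transpose R *v h) ** transpose R) $ i
      = (\<Sum>j\<in>UNIV. (R ** (\<Sum>k\<in>UNIV. R$j$k *\<^sub>R L (axis k 1)) ** transpose R) $ i $ j)"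
      by (simp only: divL_def vec_lambda_beta e)
    also have "\<dots> = (\<Sum>j\<in>UNIV. \<Sum>b\<in>UNIV. \<Sum>a\<in>UNIV. \<Sum>k\<in>UNIV. R$i$a * L (axis k 1) $a$b * (R$j$k * R$j$b))"
      by (simp add: matrix_matrix_mult_def transpose_def sum_distrib_left sum_distrib_right mult_ac sum_component)
    also have "\<dots> = (\<Sum>a\<in>UNIV. \<Sum>k\<in>UNIV. \<Sum>b\<in>UNIV. R$i$a * L (axis k 1) $a$b * (\<Sum>j\<in>UNIV. R$j$k * R$j$b))"
      by (subst swap4) (simp add: sum_distrib_left)
    also have "\<dots> = (\<Sum>a\<in>UNIV. \<Sum>k\<in>UNIV. R$i$a * L (axis k 1) $a$k)"
      by (simp add: o if_distrib cong: if_cong)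
    also have "\<dots> = (R *v divL L) $ i"
      by (simp add: divL_def matrix_vector_mult_def sum_distrib_left)
    finally show "divL (\<lambda>h. R ** L (transpose R *v h) ** transpose R) $ i = (R *v divL L) $ i" .
  qed
qed

lemma mat_scal: "(mat a :: mat3) = a *\<^sub>R mat 1"
  by (simp add: vec_eq_iff mat_def)
lemma mat_mult_left: "mat a ** (X::mat3) = a *\<^sub>R X"
  by (subst mat_scal) (simp only: scalar_matrix_assoc[symmetric] matrix_mul_lid)
lemma mat_mult_right: "(X::mat3) ** mat a = a *\<^sub>R X"
  by (subst mat_scal) (simp only: matrix_scalar_ac matrix_mul_rid)
lemma mat_mult_vec: "mat a *v (v::vec3) = a *\<^sub>R v"
  by (subst mat_scal) (simp only: scaleR_matrix_vector_assoc[symmetric] matrix_vector_mul_lid)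

lemma divL_scaleR: "divL (\<lambda>h. k *\<^sub>R L h) = k *\<^sub>R divL L"
  by (simp add: divL_def vec_eq_iff sum_distrib_left)

lemma divL_scal:
  assumes lin: "linear L"
  shows "divL (\<lambda>h. mat c ** L (mat c *v h) ** mat c) = mat (c^3) *v divL L"
proof -
  have "(\<lambda>h. mat c ** L (mat c *v h) ** mat c) = (\<lambda>h. (c^3) *\<^sub>R L h)"
    by (simp add: mat_mult_left mat_mult_right mat_mult_vec linear_scale[OF lin] power3_eq_cube mult.assoc)
  then show ?thesis by (simp add: divL_scaleR mat_mult_vec)
qed

lemma divM_outer:
  assumes f: "(f has_derivative f') (at x)"
  shows "divM (\<lambda>y. outer (f y)) x = matrix f' *v f x + trace (matrix f') *\<^sub>R f x"
proof -
  have c: "((\<lambda>y. f y $ i) has_derivative (\<lambda>h. f' h $ i)) (at x)" for i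
    using bounded_linear.has_derivative[OF bounded_linear_vec_nth, OF f] .
  have d: "((\<lambda>y. outer (f y) $ i $ j) has_derivative (\<lambda>h. f x $ i * f' h $ j + f' h $ i * f x $ j)) (at x)" for i j
    unfolding outer_def using has_derivative_mult[OF c[of i] c[of j]] by simp
  have "partial (\<lambda>y. outer (f y) $ i $ j) j x = f x $ i * f' (axis j 1) $ j + f' (axis j 1) $ i * f x $ j" for i j
    unfolding partial_def frechet_derivative_at[OF d[of i j], symmetric] by simp
  then have "divM (\<lambda>y. outer (f y)) x $ i = (matrix f' *v f x + trace (matrix f') *\<^sub>R f x) $ i" for i
  proof -
    assume h: "\<And>i j. partial (\<lambda>y. outer (f y) $ i $ j) j x = f x $ i * f' (axis j 1) $ j + f' (axis j 1) $ i * f x $ j"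
    have "divM (\<lambda>y. outer (f y)) x $ i = (\<Sum>j\<in>UNIV. f x $ i * f' (axis j 1) $ j + f' (axis j 1) $ i * f x $ j)"
      by (simp add: divM_def h)
    also have "\<dots> = (\<Sum>j\<in>UNIV. f' (axis j 1) $ i * f x $ j) + (\<Sum>j\<in>UNIV. f' (axis j 1) $ j) * f x $ i"
      by (simp add: sum.distrib sum_distrib_left sum_distrib_right mult.commute)
    also have "\<dots> = (matrix f' *v f x + trace (matrix f') *\<^sub>R f x) $ i"
      by (simp add: matrix_def matrix_vector_mult_def trace_def)
    finally show ?thesis .
  qed
  then show ?thesis by (simp add: vec_eq_iff)
qed

lemma grad_transform:
  assumes P: "(p has_derivative P) (at (B *v x + b))"
  shows "((\<lambda>y. kp * p (B *v y + b) + q \<bullet> y + r) has_derivative (\<lambda>h. kp * P (B *v h) + q \<bullet> h)) (at x)"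
    and "grad (\<lambda>y. kp * p (B *v y + b) + q \<bullet> y + r) x = kp *\<^sub>R (transpose B *v grad p (B *v x + b)) + q"
proof -
  have g: "((\<lambda>y. B *v y + b) has_derivative (\<lambda>h. B *v h)) (at x)"
    using has_derivative_add[OF bounded_linear_imp_has_derivative[OF matrix_vector_mul_bounded_linear] has_derivative_const]
    by simp
  have P': "(p has_derivative P) (at (B *v x + b) within range (\<lambda>y. B *v y + b))"
    using P by (rule has_derivative_at_withinI)
  have "((\<lambda>y. p (B *v y + b)) has_derivative (\<lambda>h. P (B *v h))) (at x)"
    using diff_chain_at[OF g P] by (simp add: o_def)
  then show D: "((\<lambda>y. kp * p (B *v y + b) + q \<bullet> y + r) has_derivative (\<lambda>h. kp * P (B *v h) + q \<bullet> h)) (at x)"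
    by (auto intro!: derivative_eq_intros)
  have linP: "linear P" using P has_derivative_linear by blast
  have gp: "grad p (B *v x + b) = (\<chi> j. P (axis j 1))"
    unfolding grad_def partial_def using frechet_derivative_at[OF P] by simp
  have "P (B *v axis j 1) = (transpose B *v grad p (B *v x + b)) $ j" for j
  proof -
    have "P (B *v axis j 1) = (\<Sum>k\<in>UNIV. (B *v axis j 1) $ k *\<^sub>R P (axis k 1))"
      by (rule lin_expand[OF linP])
    also have "\<dots> = (\<Sum>k\<in>UNIV. B $ k $ j * P (axis k 1))"
      by (simp add: matrix_vector_mult_basis column_def)
    also have "\<dots> = (transpose B *v grad p (B *v x + b)) $ j"
      by (simp only: gp) (simp add: matrix_vector_mult_def transpose_def)
    finally show ?thesis .
  qed
  note hP = this
  have "grad (\<lambda>y. kp * p (B *v y + b) + q \<bullet> y + r) x = (\<chi> j. kp * P (B *v axis j 1) + q $ j)"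
    unfolding grad_def partial_def frechet_derivative_at[OF D, symmetric]
    by (simp add: inner_axis)
  also have "\<dots> = (\<chi> j. kp * (transpose B *v grad p (B *v x + b)) $ j + q $ j)"
    by (simp only: hP)
  also have "\<dots> = kp *\<^sub>R (transpose B *v grad p (B *v x + b)) + q"
    by (simp only: vec_eq_iff vec_lambda_beta vector_add_component vector_scaleR_component) simp
  finally show "grad (\<lambda>y. kp * p (B *v y + b) + q \<bullet> y + r) x = kp *\<^sub>R (transpose B *v grad p (B *v x + b)) + q" .
qed

lemma mat_radd: "((A::mat3) + B) ** C = A ** C + B ** C"
  by (simp add: matrix_matrix_mult_def vec_eq_iff sum.distrib algebra_simps)
lemma mat_rdiff: "((A::mat3) - B) ** C = A ** C - B ** C"
  by (simp add: matrix_matrix_mult_def vec_eq_iff sum_subtractf algebra_simps)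
lemma mat_ldiff: "(A::mat3) ** (B - C) = A ** B - A ** C"
  by (simp add: matrix_matrix_mult_def vec_eq_iff sum_subtractf algebra_simps)

definition cj :: "mat3 \<Rightarrow> mat3 \<Rightarrow> mat3" where
  "cj R X = R ** X ** transpose R"

locale orthR =
  fixes R :: mat3
  assumes o1: "transpose R ** R = mat 1" and o2: "R ** transpose R = mat 1"
begin

lemma cancel: "transpose R ** (R ** Z) = Z"
  by (simp add: matrix_mul_assoc o1)

lemma cj_mult: "cj R X ** cj R Y = cj R (X ** Y)"
  by (simp add: cj_def matrix_mul_assoc[symmetric] cancel)

lemma cj_trace: "trace (cj R X) = trace X"
  unfolding cj_def by (metis trace_mul_sym cancel matrix_mul_assoc)

lemma cj_add: "cj R (X + Y) = cj R X + cj R Y"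
  by (simp add: cj_def matrix_add_ldistrib mat_radd)

lemma cj_diff: "cj R (X - Y) = cj R X - cj R Y"
  by (simp add: cj_def mat_ldiff mat_rdiff)

lemma cj_scale: "cj R (a *\<^sub>R X) = a *\<^sub>R cj R X"
  by (simp add: cj_def matrix_scalar_ac scalar_matrix_assoc)

lemma cj_one: "cj R (mat 1) = mat 1"
  by (simp add: cj_def o2)

lemma cj_dev: "dev (cj R X) = cj R (dev X)"
  by (simp add: dev_def cj_diff cj_scale cj_one cj_trace)

lemma cj_comm: "comm (cj R X) (cj R Y) = cj R (comm X Y)"
  by (simp add: comm_def cj_diff cj_mult)

lemma cj_normS: "normS (cj R X) = normS X"
  by (simp add: normS_def cj_mult cj_trace)

lemma tau_rot:
  "tau_model a1 a2 a3 a4 a5 a6 a7 (cj R S) (cj R W) = cj R (tau_model a1 a2 a3 a4 a5 a6 a7 S W)"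
  by (simp add: tau_model_def Let_def cj_mult cj_trace cj_normS cj_dev cj_comm cj_add cj_scale)

end

lemma scaleR_mm: "(a *\<^sub>R (X::mat3)) ** (b *\<^sub>R Y) = (a * b) *\<^sub>R (X ** Y)"
  by (simp add: matrix_scalar_ac scalar_matrix_assoc mult.commute)
lemma trace_scaleR: "trace (a *\<^sub>R (X::mat3)) = a * trace X"
  by (simp add: trace_def sum_distrib_left)
lemma dev_scaleR: "dev (a *\<^sub>R X) = a *\<^sub>R dev X"
  by (simp add: dev_def trace_scaleR algebra_simps)
lemma comm_scaleR: "comm (a *\<^sub>R X) (b *\<^sub>R Y) = (a * b) *\<^sub>R comm X Y"
  by (simp add: comm_def scaleR_mm algebra_simps)
lemma normS_scaleR: "c > 0 \<Longrightarrow> normS (c *\<^sub>R X) = c * normS X"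
  by (simp add: normS_def scaleR_mm trace_scaleR real_sqrt_mult)

lemma power6_eq: "(x::real)^6 = x*x*x*x*x*x"
  by (simp add: numeral_eq_Suc)

lemma tau_scale:
  assumes c: "c > 0"
  shows "tau_model a1 a2 a3 a4 a5 a6 a7 (c *\<^sub>R S) (c *\<^sub>R W) = c *\<^sub>R tau_model a1 a2 a3 a4 a5 a6 a7 S W"
proof -
  have c0: "c \<noteq> 0" using c by simp
  have k2: "c*c*t/(c*n)^2 = t/n^2" for t n using c0 by (simp add: power2_eq_square)
  have k3: "c*c*c*t/(c*n)^3 = t/n^3" for t n using c0 by (simp add: power3_eq_cube)
  have k4: "c*c*c*c*t/(c*n)^4 = t/n^4" for t n using c0 by (simp add: power4_eq_xxxx)
  have k6: "c*c*c*c*c*c*t/(c*n)^6 = t/n^6" for t n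
  proof -
    have "(c*n)^6 = (c*c*c*c*c*c) * n^6" by (simp add: power_mult_distrib power6_eq)
    then show ?thesis using c0 by simp
  qed
  have m2: "a*(c*c*c)/(c*n)^2 = c*(a/n^2)" for a n using c0 by (simp add: power2_eq_square)
  have m3: "a*(c*c*c*c)/(c*n)^3 = c*(a/n^3)" for a n using c0 by (simp add: power3_eq_cube mult_ac)
  show ?thesis
    using c
    apply (simp add: tau_model_def Let_def scaleR_mm trace_scaleR dev_scaleR comm_scaleR normS_scaleR
       k2 k3 k4 k6 m2 m3 scaleR_add_right)
    apply (simp add: scaleR_scaleR times_divide_eq_right mult.commute)
    done
qed

lemma joint_facts:
  assumes F: "((\<lambda>(s,y). u s y) has_derivative F') (at (t0,z0))"
  shows "(u t0 has_derivative (\<lambda>h. F' (0,h))) (at z0)"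
    and "grad_u u t0 z0 *v h = F' (0,h)"
    and "dt u t0 z0 = F' (1,0)"
proof -
  have lin: "linear F'" using F has_derivative_linear by blast
  have p1: "((\<lambda>y. (t0, y)) has_derivative (\<lambda>h. (0, h))) (at z0)"
    by (rule has_derivative_Pair[OF has_derivative_const has_derivative_ident])
  have F1: "((\<lambda>(s,y). u s y) has_derivative F') (at (t0,z0) within range (\<lambda>y. (t0, y)))"
    using F by (rule has_derivative_at_withinI)
  have "((\<lambda>y. (\<lambda>(s,y). u s y) (t0, y)) has_derivative (\<lambda>h. F' (0,h))) (at z0)"
    using diff_chain_at[OF p1 F] by (simp add: o_def)
  then show uD: "(u t0 has_derivative (\<lambda>h. F' (0,h))) (at z0)" by simp
  have l2: "linear (\<lambda>h. F' (0,h))" using uD has_derivative_linear by blast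
  have "grad_u u t0 z0 = matrix (\<lambda>h. F' (0,h))"
    unfolding grad_u_def jacobian_def frechet_derivative_at[OF uD, symmetric] ..
  then show "grad_u u t0 z0 *v h = F' (0,h)"
    using matrix_vector_mul(2)[OF l2] by (metis)
  have p2: "((\<lambda>s. (s, z0)) has_derivative (\<lambda>a. (a, 0))) (at t0)"
    by (rule has_derivative_Pair[OF has_derivative_ident has_derivative_const])
  have "((\<lambda>s. (\<lambda>(s,y). u s y) (s, z0)) has_derivative (\<lambda>a. F' (a,0))) (at t0)"
    using diff_chain_at[OF p2 F] by (simp add: o_def)
  moreover have "(\<lambda>a. F' (a,0)) = (\<lambda>a. a *\<^sub>R F' (1,0))"
  proof
    fix a :: real
    have "F' (a,0) = F' (a *\<^sub>R (1,0))" by simp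
    also have "\<dots> = a *\<^sub>R F' (1,0)" by (rule linear_scale[OF lin])
    finally show "F' (a,0) = a *\<^sub>R F' (1,0)" .
  qed
  ultimately have "((\<lambda>s. u s z0) has_vector_derivative F' (1,0)) (at t0)"
    by (simp add: has_vector_derivative_def)
  then show "dt u t0 z0 = F' (1,0)"
    unfolding dt_def by (rule vector_derivative_at)
qed

lemma time_transform:
  fixes u u' :: "real \<Rightarrow> vec3 \<Rightarrow> vec3" and \<beta> \<gamma> :: "real \<Rightarrow> vec3"
  assumes F: "((\<lambda>(s,y). u s y) has_derivative F') (at (k*t+m, B *v x - \<beta> t))"
    and d\<beta>: "(\<beta> has_vector_derivative \<beta>') (at t)" and d\<gamma>: "(\<gamma> has_vector_derivative \<gamma>') (at t)"
    and u': "\<And>s y. u' s y = A *v u (k * s + m) (B *v y - \<beta> s) + \<gamma> s"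
  shows "(\<lambda>(s,y). u' s y) differentiable at (t,x)"
    and "dt u' t x = A *v (k *\<^sub>R dt u (k*t+m) (B *v x - \<beta> t) - grad_u u (k*t+m) (B *v x - \<beta> t) *v \<beta>') + \<gamma>'"
proof -
  have lin: "linear F'" using F has_derivative_linear by blast
  have bd: "(\<beta> has_derivative (\<lambda>a. a *\<^sub>R \<beta>')) (at t)" using d\<beta> by (simp add: has_vector_derivative_def)
  have gd: "(\<gamma> has_derivative (\<lambda>a. a *\<^sub>R \<gamma>')) (at t)" using d\<gamma> by (simp add: has_vector_derivative_def)
  have fstd: "((\<lambda>w::real \<times> vec3. fst w) has_derivative (\<lambda>w. fst w)) (at (t,x))"
    using has_derivative_fst[OF has_derivative_ident] .
  have sndd: "((\<lambda>w::real \<times> vec3. snd w) has_derivative (\<lambda>w. snd w)) (at (t,x))"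
    using has_derivative_snd[OF has_derivative_ident] .
  have b1: "((\<lambda>w. \<beta> (fst w)) has_derivative (\<lambda>w. fst w *\<^sub>R \<beta>')) (at (t,x))"
    using has_derivative_compose[OF fstd, of \<beta> "\<lambda>a. a *\<^sub>R \<beta>'"] bd by simp
  have g1: "((\<lambda>w. \<gamma> (fst w)) has_derivative (\<lambda>w. fst w *\<^sub>R \<gamma>')) (at (t,x))"
    using has_derivative_compose[OF fstd, of \<gamma> "\<lambda>a. a *\<^sub>R \<gamma>'"] gd by simp
  have k1: "((\<lambda>w::real \<times> vec3. k * fst w + m) has_derivative (\<lambda>w. k * fst w)) (at (t,x))"
    using has_derivative_add_const[OF has_derivative_mult_right[OF fstd, of k]] by simp
  have s1: "((\<lambda>w::real \<times> vec3. B *v snd w) has_derivative (\<lambda>w. B *v snd w)) (at (t,x))"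
    using bounded_linear.has_derivative[OF matrix_vector_mul_bounded_linear, OF sndd] .
  have G: "((\<lambda>w. (k * fst w + m, B *v snd w - \<beta> (fst w))) has_derivative
            (\<lambda>w. (k * fst w, B *v snd w - fst w *\<^sub>R \<beta>'))) (at (t,x))"
    by (rule has_derivative_Pair[OF k1 has_derivative_diff[OF s1 b1]])
  have FG: "((\<lambda>w. (\<lambda>(s,y). u s y) (k * fst w + m, B *v snd w - \<beta> (fst w))) has_derivative
            (\<lambda>w. F' (k * fst w, B *v snd w - fst w *\<^sub>R \<beta>'))) (at (t,x))"
    using has_derivative_compose[OF G, of "\<lambda>(s,y). u s y" F'] F by simp
  have AFG: "((\<lambda>w. A *v (\<lambda>(s,y). u s y) (k * fst w + m, B *v snd w - \<beta> (fst w)) + \<gamma> (fst w)) has_derivative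
            (\<lambda>w. A *v F' (k * fst w, B *v snd w - fst w *\<^sub>R \<beta>') + fst w *\<^sub>R \<gamma>')) (at (t,x))"
    using has_derivative_add[OF bounded_linear.has_derivative[OF matrix_vector_mul_bounded_linear, OF FG] g1] .
  have eqf: "(\<lambda>w. A *v (\<lambda>(s,y). u s y) (k * fst w + m, B *v snd w - \<beta> (fst w)) + \<gamma> (fst w)) = (\<lambda>(s,y). u' s y)"
    by (auto simp: u')
  have U: "((\<lambda>(s,y). u' s y) has_derivative
            (\<lambda>w. A *v F' (k * fst w, B *v snd w - fst w *\<^sub>R \<beta>') + fst w *\<^sub>R \<gamma>')) (at (t,x))"
    using AFG unfolding eqf .
  then show "(\<lambda>(s,y). u' s y) differentiable at (t,x)" by (rule differentiableI)
  have p2: "((\<lambda>s. (s, x)) has_derivative (\<lambda>a. (a, 0))) (at t)"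
    by (rule has_derivative_Pair[OF has_derivative_ident has_derivative_const])
  have "((\<lambda>s. (\<lambda>(s,y). u' s y) (s, x)) has_derivative
          (\<lambda>a. A *v F' (k * a, - (a *\<^sub>R \<beta>')) + a *\<^sub>R \<gamma>')) (at t)"
    using has_derivative_compose[OF p2 U] by simp
  moreover have "(\<lambda>a. A *v F' (k * a, - (a *\<^sub>R \<beta>')) + a *\<^sub>R \<gamma>') = (\<lambda>a. a *\<^sub>R (A *v F' (k, - \<beta>') + \<gamma>'))"
  proof
    fix a :: real
    have "F' (k * a, - (a *\<^sub>R \<beta>')) = F' (a *\<^sub>R (k, - \<beta>'))" by (simp add: mult.commute)
    also have "\<dots> = a *\<^sub>R F' (k, - \<beta>')" by (rule linear_scale[OF lin])
    finally show "A *v F' (k * a, - (a *\<^sub>R \<beta>')) + a *\<^sub>R \<gamma>' = a *\<^sub>R (A *v F' (k, - \<beta>') + \<gamma>')"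
      by (simp add: scaleR_add_right matrix_scaleR_vector_ac scaleR_matrix_vector_assoc)
  qed
  ultimately have "((\<lambda>s. u' s x) has_vector_derivative (A *v F' (k, - \<beta>') + \<gamma>')) (at t)"
    by (simp add: has_vector_derivative_def)
  then have dtu': "dt u' t x = A *v F' (k, - \<beta>') + \<gamma>'"
    unfolding dt_def by (rule vector_derivative_at)
  have e: "(k, - \<beta>') = k *\<^sub>R (1::real, 0::vec3) + (-1) *\<^sub>R (0, \<beta>')" by simp
  have "F' (k, - \<beta>') = k *\<^sub>R F' (1,0) + (-1) *\<^sub>R F' (0, \<beta>')"
    unfolding e by (simp only: linear_add[OF lin] linear_scale[OF lin])
  also have "\<dots> = k *\<^sub>R F' (1,0) - F' (0, \<beta>')" by simp
  also have "\<dots> = k *\<^sub>R dt u (k*t+m) (B *v x - \<beta> t) - grad_u u (k*t+m) (B *v x - \<beta> t) *v \<beta>'"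
    using joint_facts[OF F] by simp
  finally show "dt u' t x = A *v (k *\<^sub>R dt u (k*t+m) (B *v x - \<beta> t) - grad_u u (k*t+m) (B *v x - \<beta> t) *v \<beta>') + \<gamma>'"
    using dtu' by simp
qed


lemma inner_aff:
  fixes B :: mat3 and b x :: vec3
  shows "((\<lambda>y. B *v y - b) has_derivative (\<lambda>h. B *v h)) (at x)"

  using has_derivative_diff[OF bounded_linear_imp_has_derivative[OF matrix_vector_mul_bounded_linear[of B]] has_derivative_const[of b]]
  by (simp only: diff_zero)

lemma space_transform:
  fixes u :: "real \<Rightarrow> vec3 \<Rightarrow> vec3" and A B :: mat3 and b c y :: vec3
  assumes
 J: "(\<lambda>(s,y). u s y) differentiable at (t0, B *v y - b)"
  shows "((\<lambda>y'. A *v u t0 (B *v y' - b) + c) has_derivative (\<lambda>h. (A ** grad_u u t0 (B *v y - b) ** B) *v h)) (at y)"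
proof -
  obtain F' where F: "((\<lambda>(s,y). u s y) has_derivative F') (at (t0, B *v y - b))"
    using J unfolding differentiable_def by blast
  have uD: "(u t0 has_derivative (\<lambda>h. grad_u u t0 (B *v y - b) *v h)) (at (B *v y - b))"
    using joint_facts(1,2)[OF F] by simp
  have "((u t0 \<circ> (\<lambda>y. B *v y - b)) has_derivative ((\<lambda>h. grad_u u t0 (B *v y - b) *v h) \<circ> (\<lambda>h. B *v h))) (at y)"
    by (rule diff_chain_at[OF inner_aff uD])
  then have "((\<lambda>y'. u t0 (B *v y' - b)) has_derivative (\<lambda>h. grad_u u t0 (B *v y - b) *v (B *v h))) (at y)"
    by (simp add: o_def)
  from has_derivative_add_const[OF bounded_linear.has_derivative[OF matrix_vector_mul_bounded_linear, OF this], of A c]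
  show ?thesis by (simp add: matrix_vector_mul_assoc matrix_mul_assoc)
qed

lemma bl_mm: "bounded_linear (\<lambda>X::mat3. (A::mat3) ** X ** (C::mat3))"
proof -
  have "linear (\<lambda>X::mat3. A ** X ** C)"
    by (rule linearI) (simp_all add: matrix_add_ldistrib mat_radd matrix_scalar_ac scalar_matrix_assoc)
  then show ?thesis by (simp add: linear_conv_bounded_linear)
qed

lemma field_transform:
  fixes M :: "vec3 \<Rightarrow> mat3"
  assumes d: "\<forall>i j. (\<lambda>z. M z $ i $ j) differentiable at (B *v x - b)"
  shows "\<forall>i j. (\<lambda>y. (A ** M (B *v y - b) ** C) $ i $ j) differentiable at x"
    and "divM (\<lambda>y. A ** M (B *v y - b) ** C) x = divL (\<lambda>h. A ** frechet_derivative M (at (B *v x - b)) (B *v h) ** C)"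
    and "divM M (B *v x - b) = divL (frechet_derivative M (at (B *v x - b)))"
    and "linear (frechet_derivative M (at (B *v x - b)))"
proof -
  have "M differentiable at (B *v x - b)" using d mat_differentiable_iff by blast
  then have MD: "(M has_derivative frechet_derivative M (at (B *v x - b))) (at (B *v x - b))"
    using frechet_derivative_works by blast
  then show "divM M (B *v x - b) = divL (frechet_derivative M (at (B *v x - b)))" by (rule divM_eq)
  show "linear (frechet_derivative M (at (B *v x - b)))" using MD has_derivative_linear by blast
  have "((M \<circ> (\<lambda>y. B *v y - b)) has_derivative (frechet_derivative M (at (B *v x - b)) \<circ> (\<lambda>h. B *v h))) (at x)"
    by (rule diff_chain_at[OF inner_aff MD])
  from bounded_linear.has_derivative[OF bl_mm, OF this, of A C]
  have D: "((\<lambda>y. A ** M (B *v y - b) ** C) has_derivative (\<lambda>h. A ** frechet_derivative M (at (B *v x - b)) (B *v h) ** C)) (at x)"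
    by (simp add: o_def)
  then show "divM (\<lambda>y. A ** M (B *v y - b) ** C) x = divL (\<lambda>h. A ** frechet_derivative M (at (B *v x - b)) (B *v h) ** C)"
    by (rule divM_eq)
  have "(\<lambda>y. A ** M (B *v y - b) ** C) differentiable at x" using D by (rule differentiableI)
  then show "\<forall>i j. (\<lambda>y. (A ** M (B *v y - b) ** C) $ i $ j) differentiable at x"
    using mat_differentiable_iff[of "\<lambda>y. A ** M (B *v y - b) ** C" x] by simp
qed

lemma mm_scaleR_left: "(k *\<^sub>R (X::mat3)) ** (Y::mat3) = k *\<^sub>R (X ** Y)"
  by (simp add: scalar_matrix_assoc)
lemma mm_scaleR_right: "(X::mat3) ** (k *\<^sub>R (Y::mat3)) = k *\<^sub>R (X ** Y)"
  by (simp add: matrix_scalar_ac scalar_matrix_assoc)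

lemma sym_part:
  fixes A B J :: mat3

  assumes "transpose A = B"
  shows "(1/2) *\<^sub>R (A ** J ** B + transpose (A ** J ** B)) = A ** ((1/2) *\<^sub>R (J + transpose J)) ** B"
    and "(1/2) *\<^sub>R (A ** J ** B - transpose (A ** J ** B)) = A ** ((1/2) *\<^sub>R (J - transpose J)) ** B"
  using assms
  by (auto simp: matrix_transpose_mul matrix_mul_assoc matrix_add_ldistrib mat_radd mat_rdiff mat_ldiff
      mm_scaleR_left mm_scaleR_right scaleR_add_right scaleR_diff_right)


lemma master_point:
  fixes u u' :: "real \<Rightarrow> vec3 \<Rightarrow> vec3" and p p' :: "real \<Rightarrow> vec3 \<Rightarrow> real"
    and A B K :: mat3 and k m kp :: real
    and \<beta> \<gamma> \<beta>' \<gamma>' q :: "real \<Rightarrow> vec3" and r :: "real \<Rightarrow> real"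
    and \<tau> :: "mat3 \<Rightarrow> mat3 \<Rightarrow> mat3"
  assumes sol: "NS_sol \<nu> \<rho> \<tau> u p"
    and u': "\<And>s y. u' s y = A *v u (k * s + m) (B *v y - \<beta> s) + \<gamma> s"
    and p': "\<And>s y. p' s y = kp * p (k * s + m) (B *v y + - \<beta> s) + q s \<bullet> y + r s"
    and d\<beta>: "\<And>t. (\<beta> has_vector_derivative \<beta>' t) (at t)"
    and d\<gamma>: "\<And>t. (\<gamma> has_vector_derivative \<gamma>' t) (at t)"
    and AB: "transpose A = B"
    and tauH: "\<And>S W. \<tau> (A ** S ** B) (A ** W ** B) = A ** \<tau> S W ** B"
    and divH: "\<And>L. linear L \<Longrightarrow> divL (\<lambda>h. A ** L (B *v h) ** B) = K *v divL L"
    and trH: "\<And>J. trace J = 0 \<Longrightarrow> trace (A ** J ** B) = 0"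
    and eqH: "\<And>t D J U P DS DT. D + J *v U + (1/\<rho>) *\<^sub>R P - (2*\<nu>) *\<^sub>R DS + DT = 0 \<Longrightarrow> trace J = 0 \<Longrightarrow>
        (A *v (k *\<^sub>R D - J *v \<beta>' t) + \<gamma>' t) + (A ** J ** B) *v (A *v U + \<gamma> t)
        + (1/\<rho>) *\<^sub>R (kp *\<^sub>R (transpose B *v P) + q t) - (2*\<nu>) *\<^sub>R (K *v DS) + K *v DT = 0"
  shows "(\<lambda>(s, y). u' s y) differentiable at (t, x)"
    and "\<forall>i j. (\<lambda>y. strain u' t y $ i $ j) differentiable at x"
    and "\<forall>i j. (\<lambda>y. \<tau> (strain u' t y) (vort u' t y) $ i $ j) differentiable at x"
    and "p' t differentiable at x"
    and "trace (grad_u u' t x) = 0"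
    and "dt u' t x + divM (\<lambda>y. outer (u' t y)) x + (1 / \<rho>) *\<^sub>R grad (p' t) x
         - (2 * \<nu>) *\<^sub>R divM (strain u' t) x
         + divM (\<lambda>y. \<tau> (strain u' t y) (vort u' t y)) x = 0"
proof -
  have solt1: "\<And>t x. (\<lambda>(s,y). u s y) differentiable at (t,x)"
    using sol unfolding NS_sol_def by blast
  have solt2: "\<And>t x. \<forall>i j. (\<lambda>y. strain u t y $ i $ j) differentiable at x"
    using sol unfolding NS_sol_def by blast
  have solt3: "\<And>t x. \<forall>i j. (\<lambda>y. \<tau> (strain u t y) (vort u t y) $ i $ j) differentiable at x"
    using sol unfolding NS_sol_def by blast
  have solt4: "\<And>t x. p t differentiable at x"
    using sol unfolding NS_sol_def by blast
  have solt5: "\<And>t x. trace (grad_u u t x) = 0"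
    using sol unfolding NS_sol_def by blast
  have solt6: "\<And>t x. dt u t x + divM (\<lambda>y. outer (u t y)) x + (1 / \<rho>) *\<^sub>R grad (p t) x
         - (2 * \<nu>) *\<^sub>R divM (strain u t) x + divM (\<lambda>y. \<tau> (strain u t y) (vort u t y)) x = 0"
    using sol unfolding NS_sol_def by blast
  define t0 where "t0 = k * t + m"
  define z0 where "z0 = B *v x - \<beta> t"
  have u't: "u' t = (\<lambda>y. A *v u t0 (B *v y - \<beta> t) + \<gamma> t)" by (rule ext) (simp add: u' t0_def)
  have u'D: "(u' t has_derivative (\<lambda>h. (A ** grad_u u t0 (B *v y - \<beta> t) ** B) *v h)) (at y)" for y
    unfolding u't by (rule space_transform[OF solt1])
  have gu': "grad_u u' t y = A ** grad_u u t0 (B *v y - \<beta> t) ** B" for y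
    unfolding grad_u_def jacobian_def frechet_derivative_at[OF u'D[of y], symmetric] by simp
  have str': "strain u' t = (\<lambda>y. A ** strain u t0 (B *v y - \<beta> t) ** B)"
    by (rule ext) (simp add: strain_def gu' sym_part(1)[OF AB])
  have vor': "vort u' t = (\<lambda>y. A ** vort u t0 (B *v y - \<beta> t) ** B)"
    by (rule ext) (simp add: vort_def gu' sym_part(2)[OF AB])
  have tau': "(\<lambda>y. \<tau> (strain u' t y) (vort u' t y)) = (\<lambda>y. A ** \<tau> (strain u t0 (B *v y - \<beta> t)) (vort u t0 (B *v y - \<beta> t)) ** B)"
    by (simp add: str' vor' tauH)
  have s2: "\<forall>i j. (\<lambda>z. strain u t0 z $ i $ j) differentiable at (B *v x - \<beta> t)"
    using solt2 by blast
  have s3: "\<forall>i j. (\<lambda>z. \<tau> (strain u t0 z) (vort u t0 z) $ i $ j) differentiable at (B *v x - \<beta> t)"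
    using solt3 by blast
  note FS1 = field_transform(1)[OF s2, where A = A and C = B]
  note FS2 = field_transform(2)[OF s2, where A = A and C = B]
  note FS3 = field_transform(3)[OF s2]
  note FS4 = field_transform(4)[OF s2]
  note FT1 = field_transform(1)[OF s3, where A = A and C = B]
  note FT2 = field_transform(2)[OF s3, where A = A and C = B]
  note FT3 = field_transform(3)[OF s3]
  note FT4 = field_transform(4)[OF s3]


  have F: "((\<lambda>(s,y). u s y) has_derivative (frechet_derivative (\<lambda>(s,y). u s y) (at (t0,z0)))) (at (k*t+m, B *v x - \<beta> t))"
    using solt1[of t0 z0] frechet_derivative_works unfolding t0_def z0_def by blast
  note TT = time_transform[OF F d\<beta>[of t] d\<gamma>[of t] u']
  show "(\<lambda>(s, y). u' s y) differentiable at (t, x)" by (rule TT(1))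
  show "\<forall>i j. (\<lambda>y. strain u' t y $ i $ j) differentiable at x"
    unfolding str' by (rule FS1)
  show "\<forall>i j. (\<lambda>y. \<tau> (strain u' t y) (vort u' t y) $ i $ j) differentiable at x"
  proof -
    have "\<tau> (strain u' t y) (vort u' t y) = A ** \<tau> (strain u t0 (B *v y - \<beta> t)) (vort u t0 (B *v y - \<beta> t)) ** B" for y
      using tau' by metis
    then show ?thesis by (simp only:) (rule FT1)
  qed


  have p't: "p' t = (\<lambda>y. kp * p t0 (B *v y + - \<beta> t) + q t \<bullet> y + r t)"
    by (rule ext) (simp add: p' t0_def)
  have PD: "(p t0 has_derivative frechet_derivative (p t0) (at (B *v x + - \<beta> t))) (at (B *v x + - \<beta> t))"
    using solt4 frechet_derivative_works by blast
  note GT = grad_transform[OF PD, of kp "q t" "r t"]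
  show "p' t differentiable at x"
    unfolding p't using GT(1) by (rule differentiableI)
  have J0: "trace (grad_u u t0 z0) = 0" by (rule solt5)
  show "trace (grad_u u' t x) = 0"
    unfolding gu' using trH J0 z0_def by simp
  define D where "D = dt u t0 z0"
  define J where "J = grad_u u t0 z0"
  define U where "U = u t0 z0"
  define P where "P = grad (p t0) z0"
  define DS where "DS = divM (strain u t0) z0"
  define DT where "DT = divM (\<lambda>y. \<tau> (strain u t0 y) (vort u t0 y)) z0"
  have uD0: "(u t0 has_derivative (\<lambda>h. J *v h)) (at z0)"
    using joint_facts(1,2)[OF F] unfolding J_def t0_def z0_def by simp
  have out0: "divM (\<lambda>y. outer (u t0 y)) z0 = J *v U"
    using divM_outer[OF uD0] J0 unfolding J_def U_def by simp
  have E0: "D + J *v U + (1/\<rho>) *\<^sub>R P - (2*\<nu>) *\<^sub>R DS + DT = 0"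
    using solt6[of t0 z0] unfolding D_def J_def U_def P_def DS_def DT_def out0[unfolded J_def U_def] by simp
  have e1: "dt u' t x = A *v (k *\<^sub>R D - J *v \<beta>' t) + \<gamma>' t"
    using TT(2) unfolding D_def J_def t0_def z0_def .
  have e2: "divM (\<lambda>y. outer (u' t y)) x = (A ** J ** B) *v (A *v U + \<gamma> t)"
  proof -
    have "trace (A ** J ** B) = 0" using trH J0 unfolding J_def .
    moreover have "u' t x = A *v U + \<gamma> t" unfolding U_def z0_def by (simp add: u't)
    ultimately show ?thesis
      using divM_outer[OF u'D[of x]] unfolding J_def z0_def by simp
  qed
  have e3: "grad (p' t) x = kp *\<^sub>R (transpose B *v P) + q t"
    unfolding p't GT(2) P_def z0_def by simp
  have e4: "divM (strain u' t) x = K *v DS"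
    unfolding str' FS2 divH[OF FS4] DS_def z0_def FS3 ..
  have e5: "divM (\<lambda>y. \<tau> (strain u' t y) (vort u' t y)) x = K *v DT"
    unfolding tau' FT2 divH[OF FT4] DT_def z0_def FT3 ..
  show "dt u' t x + divM (\<lambda>y. outer (u' t y)) x + (1 / \<rho>) *\<^sub>R grad (p' t) x
         - (2 * \<nu>) *\<^sub>R divM (strain u' t) x
         + divM (\<lambda>y. \<tau> (strain u' t y) (vort u' t y)) x = 0"
    unfolding e1 e2 e3 e4 e5 using eqH[OF E0, of t] J0 unfolding J_def by simp
qed

lemma master:
  fixes u u' :: "real \<Rightarrow> vec3 \<Rightarrow> vec3" and p p' :: "real \<Rightarrow> vec3 \<Rightarrow> real"
    and A B K :: mat3 and k m kp :: real
    and \<beta> \<gamma> \<beta>' \<gamma>' q :: "real \<Rightarrow> vec3" and r :: "real \<Rightarrow> real"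
    and \<tau> :: "mat3 \<Rightarrow> mat3 \<Rightarrow> mat3"
  assumes sol: "NS_sol \<nu> \<rho> \<tau> u p"
    and u': "\<And>s y. u' s y = A *v u (k * s + m) (B *v y - \<beta> s) + \<gamma> s"
    and p': "\<And>s y. p' s y = kp * p (k * s + m) (B *v y + - \<beta> s) + q s \<bullet> y + r s"
    and d\<beta>: "\<And>t. (\<beta> has_vector_derivative \<beta>' t) (at t)"
    and d\<gamma>: "\<And>t. (\<gamma> has_vector_derivative \<gamma>' t) (at t)"
    and AB: "transpose A = B"
    and tauH: "\<And>S W. \<tau> (A ** S ** B) (A ** W ** B) = A ** \<tau> S W ** B"
    and divH: "\<And>L. linear L \<Longrightarrow> divL (\<lambda>h. A ** L (B *v h) ** B) = K *v divL L"
    and trH: "\<And>J. trace J = 0 \<Longrightarrow> trace (A ** J ** B) = 0"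
    and eqH: "\<And>t D J U P DS DT. D + J *v U + (1/\<rho>) *\<^sub>R P - (2*\<nu>) *\<^sub>R DS + DT = 0 \<Longrightarrow> trace J = 0 \<Longrightarrow>
        (A *v (k *\<^sub>R D - J *v \<beta>' t) + \<gamma>' t) + (A ** J ** B) *v (A *v U + \<gamma> t)
        + (1/\<rho>) *\<^sub>R (kp *\<^sub>R (transpose B *v P) + q t) - (2*\<nu>) *\<^sub>R (K *v DS) + K *v DT = 0"
  shows "NS_sol \<nu> \<rho> \<tau> u' p'"
  unfolding NS_sol_def
  apply (intro allI)
  apply (intro conjI)
       apply (rule master_point(1)[OF assms]; (assumption)?)
      apply (rule master_point(2)[OF assms]; (assumption)?)
     apply (rule master_point(3)[OF assms]; (assumption)?)
    apply (rule master_point(4)[OF assms]; (assumption)?)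
   apply (rule master_point(5)[OF assms]; (assumption)?)
  apply (rule master_point(6)[OF assms]; (assumption)?)
  done


lemma zero_vd: "((\<lambda>_. 0::vec3) has_vector_derivative 0) (at t)"
  by (rule has_vector_derivative_const)

lemma inv_Gt_proof: "inv_Gt \<nu> \<rho> (tau_model a1 a2 a3 a4 a5 a6 a7)"
  unfolding inv_Gt_def
proof (intro allI impI)
  fix \<epsilon> :: real and u p
  assume sol: "NS_sol \<nu> \<rho> (tau_model a1 a2 a3 a4 a5 a6 a7) u p"
  show "NS_sol \<nu> \<rho> (tau_model a1 a2 a3 a4 a5 a6 a7) (\<lambda>t x. u (t - \<epsilon>) x) (\<lambda>t x. p (t - \<epsilon>) x)"
    apply (rule master[OF sol, where A = "mat 1" and B = "mat 1" and K = "mat 1" and k = 1 and m = "-\<epsilon>"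
          and kp = 1 and \<beta> = "\<lambda>_. 0" and \<gamma> = "\<lambda>_. 0" and \<beta>' = "\<lambda>_. 0" and \<gamma>' = "\<lambda>_. 0"
          and q = "\<lambda>_. 0" and r = "\<lambda>_. 0"])
    apply (simp_all add: zero_vd)
    done
qed

lemma inv_Gp_proof: "inv_Gp \<nu> \<rho> (tau_model a1 a2 a3 a4 a5 a6 a7)"
  unfolding inv_Gp_def
proof (intro allI impI)
  fix \<xi> :: "real \<Rightarrow> real" and u p
  assume sol: "NS_sol \<nu> \<rho> (tau_model a1 a2 a3 a4 a5 a6 a7) u p"
  show "NS_sol \<nu> \<rho> (tau_model a1 a2 a3 a4 a5 a6 a7) u (\<lambda>t x. p t x + \<xi> t)"
    apply (rule master[OF sol, where A = "mat 1" and B = "mat 1" and K = "mat 1" and k = 1 and m = 0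
          and kp = 1 and \<beta> = "\<lambda>_. 0" and \<gamma> = "\<lambda>_. 0" and \<beta>' = "\<lambda>_. 0" and \<gamma>' = "\<lambda>_. 0"
          and q = "\<lambda>_. 0" and r = \<xi>])
    apply (simp_all add: zero_vd)
    done
qed

lemma inv_SO3_proof: "inv_SO3 \<nu> \<rho> (tau_model a1 a2 a3 a4 a5 a6 a7)"
  unfolding inv_SO3_def
proof (intro allI impI)
  fix R :: mat3 and u p
  assume R: "R ** transpose R = mat 1 \<and> det R = 1"
  assume sol: "NS_sol \<nu> \<rho> (tau_model a1 a2 a3 a4 a5 a6 a7) u p"
  have o2: "R ** transpose R = mat 1" using R by blast
  have o1: "transpose R ** R = mat 1" using o2 matrix_left_right_inverse by blast
  interpret orthR R using o1 o2 by unfold_locales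
  have key: "(R ** J ** transpose R) *v (R *v U) = R *v (J *v U)" for J U
    by (simp add: matrix_vector_mul_assoc o1 flip: matrix_mul_assoc)
  show "NS_sol \<nu> \<rho> (tau_model a1 a2 a3 a4 a5 a6 a7) (\<lambda>t x. R *v u t (transpose R *v x)) (\<lambda>t x. p t (transpose R *v x))"
    apply (rule master[OF sol, where A = R and B = "transpose R" and K = R and k = 1 and m = 0
          and kp = 1 and \<beta> = "\<lambda>_. 0" and \<gamma> = "\<lambda>_. 0" and \<beta>' = "\<lambda>_. 0" and \<gamma>' = "\<lambda>_. 0"
          and q = "\<lambda>_. 0" and r = "\<lambda>_. 0"])
    subgoal by simp
    subgoal by simp
    subgoal by (rule zero_vd)
    subgoal by (rule zero_vd)
    subgoal by simp
    subgoal for S W using tau_rot[of a1 a2 a3 a4 a5 a6 a7 S W] by (simp add: cj_def)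
    subgoal for L by (rule divL_rot[OF _ o1])
    subgoal for J using cj_trace[of J] by (simp add: cj_def)
    subgoal for t D J U P DS DT
    proof -
      assume E0: "D + J *v U + (1 / \<rho>) *\<^sub>R P - (2 * \<nu>) *\<^sub>R DS + DT = 0"
      have "R *v (D + J *v U + (1 / \<rho>) *\<^sub>R P - (2 * \<nu>) *\<^sub>R DS + DT) = 0" using E0 by simp
      then show ?thesis
        by (simp add: key matrix_vector_right_distrib matrix_vector_mult_diff_distrib matrix_vector_mult_scaleR)
    qed
    done
qed

lemma inv_Gs_proof: "inv_Gs \<nu> \<rho> (tau_model a1 a2 a3 a4 a5 a6 a7)"
  unfolding inv_Gs_def
proof (intro allI impI)
  fix \<epsilon> :: real and u p
  assume sol: "NS_sol \<nu> \<rho> (tau_model a1 a2 a3 a4 a5 a6 a7) u p"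
  define c where "c = exp (- \<epsilon>)"
  have c0: "c > 0" unfolding c_def by simp
  have e2: "exp (-2 * \<epsilon>) = c * c" unfolding c_def by (simp flip: exp_add)
  show "NS_sol \<nu> \<rho> (tau_model a1 a2 a3 a4 a5 a6 a7)
     (\<lambda>t x. exp (- \<epsilon>) *\<^sub>R u (exp (-2 * \<epsilon>) * t) (exp (- \<epsilon>) *\<^sub>R x))
     (\<lambda>t x. exp (-2 * \<epsilon>) * p (exp (-2 * \<epsilon>) * t) (exp (- \<epsilon>) *\<^sub>R x))"
    unfolding e2 c_def[symmetric]
    apply (rule master[OF sol, where A = "mat c" and B = "mat c" and K = "mat (c^3)" and k = "c * c" and m = 0
          and kp = "c * c" and \<beta> = "\<lambda>_. 0" and \<gamma> = "\<lambda>_. 0" and \<beta>' = "\<lambda>_. 0" and \<gamma>' = "\<lambda>_. 0"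
          and q = "\<lambda>_. 0" and r = "\<lambda>_. 0"])
    subgoal by (simp add: mat_mult_vec)
    subgoal by (simp add: mat_mult_vec)
    subgoal by (rule zero_vd)
    subgoal by (rule zero_vd)
    subgoal by simp
    subgoal for S W using tau_scale[of "c * c" a1 a2 a3 a4 a5 a6 a7 S W] c0 by (simp add: mat_mult_left mat_mult_right)
    subgoal for L by (rule divL_scal)
    subgoal for J by (simp add: mat_mult_left mat_mult_right trace_scaleR)
    subgoal for t D J U P DS DT
    proof -
      assume E0: "D + J *v U + (1 / \<rho>) *\<^sub>R P - (2 * \<nu>) *\<^sub>R DS + DT = 0"
      have "(c^3) *\<^sub>R (D + J *v U + (1 / \<rho>) *\<^sub>R P - (2 * \<nu>) *\<^sub>R DS + DT) = 0" using E0 by simp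
      then show ?thesis
        by (simp add: mat_mult_left mat_mult_right mat_mult_vec algebra_simps power3_eq_cube
            flip: scaleR_matrix_vector_assoc)

    qed
    done
qed

lemma inv_Gal_proof:
  assumes rho: "\<rho> > 0"
  shows "inv_Gal \<nu> \<rho> (tau_model a1 a2 a3 a4 a5 a6 a7)"
  unfolding inv_Gal_def
proof (intro allI impI)
  fix \<alpha> \<alpha>' \<alpha>'' :: "real \<Rightarrow> vec3" and u p
  assume H: "(\<forall>t. (\<alpha> has_vector_derivative \<alpha>' t) (at t)) \<and>
     (\<forall>t. (\<alpha>' has_vector_derivative \<alpha>'' t) (at t)) \<and> continuous_on UNIV \<alpha>''"
  assume sol: "NS_sol \<nu> \<rho> (tau_model a1 a2 a3 a4 a5 a6 a7) u p"
  have d1: "\<And>t. (\<alpha> has_vector_derivative \<alpha>' t) (at t)" using H by blast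
  have d2: "\<And>t. (\<alpha>' has_vector_derivative \<alpha>'' t) (at t)" using H by blast
  show "NS_sol \<nu> \<rho> (tau_model a1 a2 a3 a4 a5 a6 a7) (\<lambda>t x. u t (x - \<alpha> t) + \<alpha>' t)
                        (\<lambda>t x. p t (x - \<alpha> t) - \<rho> * (\<alpha>'' t \<bullet> (x - \<alpha> t)))"
    apply (rule master[OF sol, where A = "mat 1" and B = "mat 1" and K = "mat 1" and k = 1 and m = 0
          and kp = 1 and \<beta> = \<alpha> and \<gamma> = \<alpha>' and \<beta>' = \<alpha>' and \<gamma>' = \<alpha>''
          and q = "\<lambda>s. (- \<rho>) *\<^sub>R \<alpha>'' s" and r = "\<lambda>s. \<rho> * (\<alpha>'' s \<bullet> \<alpha> s)"])
    subgoal by simp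
    subgoal for s y by (simp add: inner_diff_right algebra_simps)
    subgoal by (rule d1)
    subgoal by (rule d2)
    subgoal by simp
    subgoal by simp
    subgoal by simp
    subgoal by simp
    subgoal for t D J U P DS DT

    proof -
      assume E0: "D + J *v U + (1 / \<rho>) *\<^sub>R P - (2 * \<nu>) *\<^sub>R DS + DT = 0"
      then show ?thesis using rho by (simp add: algebra_simps)
    qed
    done
qed


theorem theorem2:
  fixes \<nu> \<rho> :: real and a1 a2 a3 a4 a5 a6 a7 :: coeff
  assumes "\<nu> > 0" and "\<rho> > 0"
  shows "inv_Gt \<nu> \<rho> (tau_model a1 a2 a3 a4 a5 a6 a7)
       \<and> inv_Gal \<nu> \<rho> (tau_model a1 a2 a3 a4 a5 a6 a7)
       \<and> inv_SO3 \<nu> \<rho> (tau_model a1 a2 a3 a4 a5 a6 a7)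
       \<and> inv_Gp \<nu> \<rho> (tau_model a1 a2 a3 a4 a5 a6 a7)
       \<and> inv_Gs \<nu> \<rho> (tau_model a1 a2 a3 a4 a5 a6 a7)"
  by (intro conjI inv_Gt_proof inv_Gal_proof[OF assms(2)] inv_SO3_proof inv_Gp_proof inv_Gs_proof)

end
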